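(* Let $\pi$ be a probability density on $(0,\infty)$ for which there exist $c>0$, $C>0$, $M_0>0$ such that $t\pi(t)\sim C/(\{1+\log(1+t)\}[1+\log\{1+\log(1+t)\}]^{1+c})$ as $t\to\infty$ and, for all $t>0$, $$t\pi(t)\le M_0\frac{1}{1+\log(1+1/t)}\frac{1}{1+\log(1+t)}\frac{1}{[1+\log\{1+\log(1+1/t)\}]^{1+c}}\frac{1}{[1+\log\{1+\log(1+t)\}]^{1+c}}.$$ For $\alpha>0$, $z\in\mathbb{R}$, $\gamma>0$, $t>0$ let $$f(\alpha,z,\gamma;t)=\int_0^\infty\frac{\alpha^\alpha\gamma}{\Gamma(\alpha)}\frac{e^{-\alpha/u}}{u^{1+\alpha}}\cdot\frac{t^\gamma e^{\gamma z}u\,\pi(t^\gamma e^{\gamma z}u)}{C/(\{1+\log(1+t)\}[1+\log\{1+\log(1+t)\}]^{1+c})}\,du.$$ Let $x_1,\dots,x_n\in\mathbb{R}^p$ and let $\mathcal{K},\mathcal{L}$ partition $\{1,\dots,n\}$, where $t_i>0$ is fixed for $i\in\mathcal{K}$ and $t_i=\exp(a_i+b_i\omega)$ for $i\in\mathcal{L}$ with fixed $a_i\in\mathbb{R}$, $b_i>0$ and $\omega>0$. Then there exists $M>0$ such that for all $i=1,\dots,n$, all $(\alpha,\tilde\beta,\gamma)\in(0,\infty)\times\mathbb{R}^p\times(0,\infty)$ and all sufficiently large $\omega$, $$f(\alpha,x_i^\top\tilde\beta,\gamma;t_i)\le\begin{cases}M(\min\{\alpha,\alpha^{1/2}\})\gamma,&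 i\in\mathcal{K},\\ M\,\omega(\log\omega)^{1+c}(\min\{\alpha,\alpha^{1/2}\})\gamma,& i\in\mathcal{L}.\end{cases}$$ *)

theory Defs
  imports "HOL-Analysis.Analysis" "HOL-Library.Landau_Symbols"
begin

definition ref_scale :: "real \<Rightarrow> real \<Rightarrow> real \<Rightarrow> real" where
  "ref_scale C c t = C / ((1 + ln (1 + t)) * (1 + ln (1 + ln (1 + t))) powr (1 + c))"

definition f_fun :: "(real \<Rightarrow> real) \<Rightarrow> real \<Rightarrow> real \<Rightarrow> real \<Rightarrow> real \<Rightarrow> real \<Rightarrow> real \<Rightarrow> ennreal" where
  "f_fun \<pi> C c \<alpha> z \<gamma> t =
     (\<integral>\<^sup>+ u \<in> {0<..}. ennreal
        ((\<alpha> powr \<alpha> * \<gamma> / Gamma \<alpha>) * (exp (- \<alpha> / u) / u powr (1 + \<alpha>)) *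
         ((t powr \<gamma> * exp (\<gamma> * z) * u * \<pi> (t powr \<gamma> * exp (\<gamma> * z) * u)) / ref_scale C c t)) \<partial>lborel)"

end

theory Submission
  imports Defs
begin

lemma Gamma_lower:
  fixes a :: real assumes "0 < a" "a \<le> 1"
  shows "Gamma (a + 1) \<ge> exp (-1)"
proof -
  have "\<exists>\<xi>. 1 < \<xi> \<and> \<xi> < a + 1 \<and> ln_Gamma (a+1) - ln_Gamma 1 = ((a+1) - 1) * Digamma \<xi>"
    using assms by (intro MVT2 derivative_intros impI allI) (auto elim!: nonpos_Ints_cases)
  then obtain \<xi> where xi: "1 < \<xi>" "\<xi> < a+1" and eq: "ln_Gamma (a+1) - ln_Gamma 1 = a * Digamma \<xi>"
    by auto
  have "Digamma (1::real) \<le> Digamma \<xi>" using xi by (intro Polygamma_real_mono) auto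
  hence d: "Digamma \<xi> \<ge> -1" using euler_mascheroni_less_13_over_22 by simp
  have l1: "ln_Gamma (1::real) = 0" by (simp add: ln_Gamma_real_pos)
  have "ln_Gamma (a+1) \<ge> -1"
  proof -
    have "a * Digamma \<xi> \<ge> a * (-1)" using d assms by (intro mult_left_mono) auto
    thus ?thesis using eq l1 assms by simp
  qed
  thus ?thesis using Gamma_real_pos_exp[of "a+1"] assms by simp
qed

lemma subst_step:
  fixes a :: real and n :: nat assumes a: "0 < a"
  shows "(\<integral>\<^sup>+u. ennreal (exp (-a/u) / u powr (1+a) * indicator {a/(real n+1)..a*(real n+1)} u) \<partial>lborel)
       = (\<integral>\<^sup>+x. ennreal (a powr (-a) * (-x) powr (a-1) * exp x * indicator {-(real n+1)..-1/(real n+1)} x) \<partial>lborel)"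
proof -
  define g where "g = (\<lambda>x::real. -a/x)"
  define g' where "g' = (\<lambda>x::real. a/(x*x))"
  let ?A = "-(real n+1)" and ?B = "-1/(real n+1)"
  have gA: "g ?A = a/(real n+1)" and gB: "g ?B = a*(real n+1)" unfolding g_def by (auto simp: field_simps)
  have AB: "?A \<le> ?B" by (auto simp: field_simps)
  have neg: "x < 0" if "x \<in> {?A..?B}" for x
  proof -
    have "?B < 0" by (auto simp: field_simps)
    moreover have "x \<le> ?B" using that by (simp only: atLeastAtMost_iff)
    ultimately show ?thesis by linarith
  qed
  have "(\<integral>\<^sup>+u. ennreal (exp (-a/u) / u powr (1+a) * indicator {g ?A..g ?B} u) \<partial>lborel)
     = (\<integral>\<^sup>+x. ennreal (exp (-a/g x) / g x powr (1+a) * g' x * indicator {?A..?B} x) \<partial>lborel)"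
  proof (rule nn_integral_substitution)
    show "set_borel_measurable borel {g ?A..g ?B} (\<lambda>u. exp (-a/u) / u powr (1+a))"
      unfolding set_borel_measurable_def by measurable
    show "(g has_real_derivative g' x) (at x)" if "x \<in> {?A..?B}" for x
      using neg[OF that] unfolding g_def g'_def
      by (auto intro!: derivative_eq_intros simp: field_simps power2_eq_square)
    show "continuous_on {?A..?B} g'" unfolding g'_def using neg
      by (intro continuous_intros) auto
    show "0 \<le> g' x" if "x \<in> {?A..?B}" for x using a unfolding g'_def by auto
  qed (rule AB)
  also have "\<dots> = (\<integral>\<^sup>+x. ennreal (a powr (-a) * (-x) powr (a-1) * exp x * indicator {?A..?B} x) \<partial>lborel)"
  proof (rule nn_integral_cong)
    fix x :: real assume "x \<in> space lborel"
    show "ennreal (exp (-a/g x) / g x powr (1+a) * g' x * indicator {?A..?B} x)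
        = ennreal (a powr (-a) * (-x) powr (a-1) * exp x * indicator {?A..?B} x)"
    proof (cases "x \<in> {?A..?B}")
      case True
      define y where "y = -x"
      have y: "y > 0" using neg[OF True] y_def by auto
      have x: "x = -y" using y_def by simp
      have e1: "-a/g x = x" unfolding g_def using y a x by auto
      have e2: "g x = a / y" unfolding g_def x by simp
      have e3: "(a/y) powr (1+a) = a powr (1+a) / y powr (1+a)" using a y by (simp add: powr_divide)
      have e4: "g' x = a / (y*y)" unfolding g'_def x by simp
      have "exp (-a/g x) / g x powr (1+a) * g' x = exp x * y powr (1+a) / a powr (1+a) * (a/(y*y))"
        using e1 e2 e3 e4 a y by simp
      also have "\<dots> = a powr (-a) * y powr (a-1) * exp x"
      proof -
        have "y powr (1+a) = y powr ((a-1) + 2)" by (simp add: algebra_simps)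
        also have "\<dots> = y powr (a-1) * y powr 2" by (rule powr_add)
        also have "y powr 2 = y*y" using y by (simp add: powr_numeral power2_eq_square)
        finally have p1: "y powr (1+a) = y powr (a-1) * (y*y)" .
        have p2: "a powr (1+a) = a * a powr a" using a by (simp add: powr_add)
        have p3: "a powr (-a) = 1 / a powr a" using a by (simp add: powr_minus_divide)
        show ?thesis using a y unfolding p1 p2 p3 by (simp add: field_simps)
      qed
      finally show ?thesis using True y_def by simp
    qed simp
  qed
  finally show ?thesis by (simp only: gA gB)
qed

lemma sup_ind:
  fixes h :: "real \<Rightarrow> real" and I :: "nat \<Rightarrow> real set"
  assumes inc: "\<And>m n. m \<le> n \<Longrightarrow> I m \<subseteq> I n" and U: "(\<Union>n. I n) = S"
    and hm: "h \<in> borel_measurable borel" and Im: "\<And>n. I n \<in> sets borel"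
  shows "(SUP n. \<integral>\<^sup>+x. ennreal (h x * indicator (I n) x) \<partial>lborel) = (\<integral>\<^sup>+x. ennreal (h x * indicator S x) \<partial>lborel)"
proof -
  let ?f = "\<lambda>n x. ennreal (h x * indicator (I n) x)"
  have "incseq ?f"
  proof (rule incseq_SucI, rule le_funI)
    fix n x
    show "?f n x \<le> ?f (Suc n) x"
      using inc[of n "Suc n"] by (cases "h x \<ge> 0") (auto simp: indicator_def ennreal_neg)
  qed
  moreover have "\<And>n. ?f n \<in> borel_measurable lborel" using hm Im by measurable
  ultimately have "(\<integral>\<^sup>+x. (SUP n. ?f n x) \<partial>lborel) = (SUP n. integral\<^sup>N lborel (?f n))"
    by (rule nn_integral_monotone_convergence_SUP)
  moreover have "(SUP n. ?f n x) = ennreal (h x * indicator S x)" for x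
  proof (cases "x \<in> S")
    case True
    then obtain k where k: "x \<in> I k" using U by auto
    show ?thesis
    proof (rule antisym)
      show "(SUP n. ?f n x) \<le> ennreal (h x * indicator S x)"
        using U True by (intro SUP_least) (auto simp: indicator_def)
      show "ennreal (h x * indicator S x) \<le> (SUP n. ?f n x)"
        using k True by (intro SUP_upper2[of k]) (auto simp: indicator_def)
    qed
  next
    case False
    then have "\<And>n. x \<notin> I n" using U by auto
    then show ?thesis using False by (simp add: indicator_def)
  qed
  ultimately show ?thesis by simp
qed

lemma kernel_int:
  fixes a :: real assumes a: "0 < a"
  shows "(\<integral>\<^sup>+u. ennreal (exp (-a/u) / u powr (1+a) * indicator {0<..} u) \<partial>lborel) = ennreal (Gamma a / a powr a)"
proof -
  define I where "I = (\<lambda>n::nat. {a/(real n+1)..a*(real n+1)})"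
  define J where "J = (\<lambda>n::nat. {-(real n+1)..-1/(real n+1)})"
  have UI: "(\<Union>n. I n) = {0<..}"
  proof
    show "(\<Union>n. I n) \<subseteq> {0<..}"
    proof
      fix u assume "u \<in> (\<Union>n. I n)"
      then obtain n where "a/(real n+1) \<le> u" unfolding I_def by auto
      moreover have "a/(real n+1) > 0" using a by simp
      ultimately show "u \<in> {0<..}" by simp
    qed
    show "{0<..} \<subseteq> (\<Union>n. I n)"
    proof
      fix u :: real assume "u \<in> {0<..}"
      hence u: "u > 0" by simp
      obtain n :: nat where n: "max (a/u) (u/a) < n" using reals_Archimedean2 by blast
      have "a/(real n+1) \<le> u" using n u a by (auto simp: field_simps)
      moreover have "u \<le> a*(real n+1)" using n u a by (auto simp: field_simps)
      ultimately show "u \<in> (\<Union>n. I n)" unfolding I_def by auto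
    qed
  qed
  have UJ: "(\<Union>n. J n) = {..<0}"
  proof
    show "(\<Union>n. J n) \<subseteq> {..<0}"
    proof
      fix u assume "u \<in> (\<Union>n. J n)"
      then obtain n where "u \<le> -1/(real n+1)" unfolding J_def by auto
      moreover have "-1/(real n+1) < 0" by simp
      ultimately have "u < 0" by linarith
      thus "u \<in> {..<0}" by simp
    qed
    show "{..<0} \<subseteq> (\<Union>n. J n)"
    proof
      fix x :: real assume "x \<in> {..<0}"
      hence x: "x < 0" by simp
      obtain n :: nat where n: "max (-x) (-1/x) < n" using reals_Archimedean2 by blast
      have "-(real n+1) \<le> x" using n x by (auto simp: field_simps)
      moreover have "x \<le> -1/(real n+1)" using n x by (auto simp: field_simps)
      ultimately show "x \<in> (\<Union>n. J n)" unfolding J_def by auto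
    qed
  qed
  have incI: "I m \<subseteq> I n" if "m \<le> n" for m n
    unfolding I_def using that a by (auto simp: field_simps intro: order_trans)
  have incJ: "J m \<subseteq> J n" if "m \<le> n" for m n
    unfolding J_def using that by (auto simp: field_simps intro: order_trans)
  have "(\<integral>\<^sup>+u. ennreal (exp (-a/u) / u powr (1+a) * indicator {0<..} u) \<partial>lborel)
      = (SUP n. \<integral>\<^sup>+u. ennreal (exp (-a/u) / u powr (1+a) * indicator (I n) u) \<partial>lborel)"
    by (rule sup_ind[symmetric, OF incI UI]) (auto simp: I_def)
  also have "\<dots> = (SUP n. \<integral>\<^sup>+x. ennreal (a powr (-a) * (-x) powr (a-1) * exp x * indicator (J n) x) \<partial>lborel)"
    unfolding I_def J_def using subst_step[OF a] by simp
  also have "\<dots> = (\<integral>\<^sup>+x. ennreal (a powr (-a) * (-x) powr (a-1) * exp x * indicator {..<0} x) \<partial>lborel)"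
    by (rule sup_ind[OF incJ UJ]) (auto simp: J_def)
  also have "\<dots> = (\<integral>\<^sup>+x. ennreal (a powr (-a) * (-(0 + (-1)*x)) powr (a-1) * exp (0 + (-1)*x) * indicator {..<0} (0 + (-1)*x)) \<partial>lborel)"
    by (subst nn_integral_real_affine[where c="-1" and t=0]) auto
  also have "\<dots> = (\<integral>\<^sup>+x. ennreal (a powr (-a)) * ennreal (indicator {0..} x * x powr (a-1) / exp x) \<partial>lborel)"
    using a by (intro nn_integral_cong) (auto simp: indicator_def exp_minus field_simps ennreal_mult'[symmetric])
  also have "\<dots> = ennreal (a powr (-a)) * Gamma a"
    by (subst nn_integral_cmult) (auto simp: Gamma_conv_nn_integral_real[OF a])
  also have "\<dots> = ennreal (Gamma a / a powr a)"
    using a by (simp add: ennreal_mult'[symmetric] powr_minus_divide)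
  finally show ?thesis .
qed

lemma scale_int:
  fixes \<pi> :: "real \<Rightarrow> real" and s :: real
  assumes pm: "\<pi> \<in> borel_measurable lborel" and s: "s > 0"
  shows "(\<integral>\<^sup>+u. ennreal (s * \<pi> (s*u)) * indicator {0<..} u \<partial>lborel) = (\<integral>\<^sup>+t. ennreal (\<pi> t) * indicator {0<..} t \<partial>lborel)"
proof -
  have pm': "\<pi> \<in> borel_measurable borel" using pm by simp
  have "(\<integral>\<^sup>+t. ennreal (\<pi> t) * indicator {0<..} t \<partial>lborel)
     = ennreal \<bar>s\<bar> * (\<integral>\<^sup>+u. ennreal (\<pi> (0 + s*u)) * indicator {0<..} (0 + s*u) \<partial>lborel)"
    using pm' s by (intro nn_integral_real_affine) auto
  also have "\<dots> = ennreal s * (\<integral>\<^sup>+u. ennreal (\<pi> (s*u)) * indicator {0<..} u \<partial>lborel)"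
    using s by (simp add: indicator_def zero_less_mult_iff)
  also have "\<dots> = (\<integral>\<^sup>+u. ennreal s * (ennreal (\<pi> (s*u)) * indicator {0<..} u) \<partial>lborel)"
    using pm' by (subst nn_integral_cmult) auto
  also have "\<dots> = (\<integral>\<^sup>+u. ennreal (s * \<pi> (s*u)) * indicator {0<..} u \<partial>lborel)"
    using s by (intro nn_integral_cong) (simp add: ennreal_mult' mult.assoc)
  finally show ?thesis by simp
qed

lemma exp_pow_le:
  fixes a u :: real assumes a: "a > 0" and u: "u > 0"
  shows "exp (-a/u) / u powr a \<le> 1"
proof -
  have "ln (1/u) \<le> 1/u - 1" using u by (intro ln_le_minus_one) auto
  hence "ln u \<ge> 1 - 1/u" using u by (simp add: ln_div)
  hence "a * ln u \<ge> a * (1 - 1/u)" using a by (intro mult_left_mono) auto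
  hence "-a/u - a * ln u \<le> -a" by (simp add: algebra_simps)
  hence "-a/u - a * ln u \<le> 0" using a by linarith
  hence "exp (-a/u - a * ln u) \<le> 1" by simp
  moreover have "exp (-a/u - a * ln u) = exp (-a/u) / u powr a"
    using u by (simp add: powr_def exp_diff)
  ultimately show ?thesis by linarith
qed

lemma factor_le1:
  fixes y c :: real assumes y: "y > 0" and c: "c > 0"
  shows "0 \<le> 1 / (1 + ln (1 + y)) \<and> 1 / (1 + ln (1 + y)) \<le> 1"
    and "0 \<le> 1 / (1 + ln (1 + ln (1 + y))) powr (1 + c) \<and> 1 / (1 + ln (1 + ln (1 + y))) powr (1 + c) \<le> 1"
proof -
  have l1: "ln (1+y) > 0" using y by simp
  have l2: "ln (1 + ln (1+y)) > 0" using l1 by simp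
  show "0 \<le> 1 / (1 + ln (1 + y)) \<and> 1 / (1 + ln (1 + y)) \<le> 1" using l1 by auto
  have "(1 + ln (1 + ln (1 + y))) powr (1 + c) \<ge> 1" using l2 c by (intro ge_one_powr_ge_zero) auto
  thus "0 \<le> 1 / (1 + ln (1 + ln (1 + y))) powr (1 + c) \<and> 1 / (1 + ln (1 + ln (1 + y))) powr (1 + c) \<le> 1"
    by (simp add: divide_le_eq_1)
qed

lemma pi_le_M0:
  fixes \<pi> :: "real \<Rightarrow> real" and M\<^sub>0 c :: real
  assumes c: "c > 0" and M0: "M\<^sub>0 > 0"
    and bound: "\<forall>t>0. t * \<pi> t \<le> M\<^sub>0
        * (1 / (1 + ln (1 + 1 / t))) * (1 / (1 + ln (1 + t)))
        * (1 / (1 + ln (1 + ln (1 + 1 / t))) powr (1 + c))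
        * (1 / (1 + ln (1 + ln (1 + t))) powr (1 + c))"
    and y: "y > 0"
  shows "y * \<pi> y \<le> M\<^sub>0"
proof -
  have y': "1/y > 0" using y by simp
  note f1 = factor_le1[OF y c] and f2 = factor_le1[OF y' c]
  have "M\<^sub>0
        * (1 / (1 + ln (1 + 1 / y))) * (1 / (1 + ln (1 + y)))
        * (1 / (1 + ln (1 + ln (1 + 1 / y))) powr (1 + c))
        * (1 / (1 + ln (1 + ln (1 + y))) powr (1 + c)) \<le> M\<^sub>0 * 1 * 1 * 1 * 1"
    using f1 f2 M0 by (intro mult_mono) (auto intro!: mult_nonneg_nonneg)
  thus ?thesis using bound y by force
qed

lemma core_bound:
  fixes \<pi> :: "real \<Rightarrow> real" and M\<^sub>0 c s R \<alpha> \<gamma> :: real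
  assumes pm: "\<pi> \<in> borel_measurable lborel"
    and nonneg: "\<forall>t>0. \<pi> t \<ge> 0"
    and dint: "(\<integral>\<^sup>+ t \<in> {0<..}. ennreal (\<pi> t) \<partial>lborel) = 1"
    and c: "c > 0" and M0: "M\<^sub>0 > 0"
    and bound: "\<forall>t>0. t * \<pi> t \<le> M\<^sub>0
        * (1 / (1 + ln (1 + 1 / t))) * (1 / (1 + ln (1 + t)))
        * (1 / (1 + ln (1 + ln (1 + 1 / t))) powr (1 + c))
        * (1 / (1 + ln (1 + ln (1 + t))) powr (1 + c))"
    and s: "s > 0" and R: "R > 0" and al: "\<alpha> > 0" and ga: "\<gamma> > 0"
  shows "(\<integral>\<^sup>+ u \<in> {0<..}. ennreal
        ((\<alpha> powr \<alpha> * \<gamma> / Gamma \<alpha>) * (exp (- \<alpha> / u) / u powr (1 + \<alpha>)) *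
         ((s * u * \<pi> (s * u)) / R)) \<partial>lborel) \<le> ennreal ((exp 1 + M\<^sub>0) * min \<alpha> (sqrt \<alpha>) * \<gamma> / R)"
proof -
  let ?X = "\<lambda>u. (\<alpha> powr \<alpha> * \<gamma> / Gamma \<alpha>) * (exp (- \<alpha> / u) / u powr (1 + \<alpha>)) * ((s * u * \<pi> (s * u)) / R)"
  have Gp: "Gamma \<alpha> > 0" using al by simp
  have sc: "(\<integral>\<^sup>+u. ennreal (s * \<pi> (s*u)) * indicator {0<..} u \<partial>lborel) = 1"
    using scale_int[OF pm s] dint by simp
  show ?thesis
  proof (cases "\<alpha> \<le> 1")
    case True
    have "\<alpha>*\<alpha> \<le> \<alpha>*1" using True al by (intro mult_left_mono) auto
    hence "\<alpha> \<le> sqrt \<alpha>" by (intro real_le_rsqrt) (simp add: power2_eq_square)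
    hence mn: "min \<alpha> (sqrt \<alpha>) = \<alpha>" by (simp add: min_def)
    have pt: "ennreal (?X u) * indicator {0<..} u \<le> ennreal (exp 1 * \<alpha> * \<gamma> / R) * (ennreal (s * \<pi> (s*u)) * indicator {0<..} u)" for u
    proof (cases "u > 0")
      case u: True
      have pin: "\<pi> (s*u) \<ge> 0" using nonneg s u by simp
      have e1: "u powr (1+\<alpha>) = u * u powr \<alpha>" using u by (simp add: powr_add)
      have G1: "Gamma (\<alpha>+1) = \<alpha> * Gamma \<alpha>" using al by (simp add: Gamma_plus1 nonpos_Ints_def)
      have Gl: "Gamma (\<alpha>+1) \<ge> exp (-1)" by (rule Gamma_lower[OF al True])
      have apow: "\<alpha> powr \<alpha> \<le> 1" using al True by (simp add: powr_le1)
      have "\<alpha> powr \<alpha> / Gamma \<alpha> = \<alpha> * (\<alpha> powr \<alpha> / Gamma (\<alpha>+1))" using G1 al Gp by (simp add: field_simps)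
      also have "\<dots> \<le> \<alpha> * (1 / exp (-1))"
        using apow Gl al by (intro mult_left_mono frac_le) auto
      finally have aG: "\<alpha> powr \<alpha> / Gamma \<alpha> \<le> exp 1 * \<alpha>" by (simp add: exp_minus mult.commute divide_inverse)
      have ep: "exp (-\<alpha>/u) / u powr \<alpha> \<le> 1" by (rule exp_pow_le[OF al u])
      have "?X u = (\<alpha> powr \<alpha> / Gamma \<alpha>) * (exp (-\<alpha>/u) / u powr \<alpha>) * (\<gamma> / R) * (s * \<pi> (s*u))"
        using u unfolding e1 by (simp add: field_simps)
      also have "\<dots> \<le> (exp 1 * \<alpha>) * 1 * (\<gamma> / R) * (s * \<pi> (s*u))"
        using aG ep pin s ga R al Gp
        by (intro mult_right_mono mult_mono) (auto intro!: divide_nonneg_nonneg)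
      finally have "?X u \<le> exp 1 * \<alpha> * \<gamma> / R * (s * \<pi> (s*u))" by simp
      thus ?thesis using u al ga R by (simp add: ennreal_mult'[symmetric] ennreal_leI)
    qed simp
    have "(\<integral>\<^sup>+ u \<in> {0<..}. ennreal (?X u) \<partial>lborel)
        \<le> (\<integral>\<^sup>+u. ennreal (exp 1 * \<alpha> * \<gamma> / R) * (ennreal (s * \<pi> (s*u)) * indicator {0<..} u) \<partial>lborel)"
      by (intro nn_integral_mono pt)
    also have "\<dots> = ennreal (exp 1 * \<alpha> * \<gamma> / R)"
      using pm by (subst nn_integral_cmult) (auto simp: sc)
    also have "\<dots> \<le> ennreal ((exp 1 + M\<^sub>0) * min \<alpha> (sqrt \<alpha>) * \<gamma> / R)"
      unfolding mn using M0 al ga R by (intro ennreal_leI divide_right_mono mult_right_mono) auto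
    finally show ?thesis .
  next
    case False
    have sq: "sqrt \<alpha> \<ge> 1" using False by simp
    have "sqrt \<alpha> * 1 \<le> sqrt \<alpha> * sqrt \<alpha>" using sq by (intro mult_left_mono) auto
    hence "sqrt \<alpha> \<le> \<alpha>" using al by simp
    hence mn: "min \<alpha> (sqrt \<alpha>) = sqrt \<alpha>" by (simp add: min_def)
    let ?k = "\<lambda>u. exp (-\<alpha>/u) / u powr (1+\<alpha>) * indicator {0<..} u"
    have pt: "ennreal (?X u) * indicator {0<..} u \<le> ennreal (M\<^sub>0 * \<gamma> / R * (\<alpha> powr \<alpha> / Gamma \<alpha>)) * ennreal (?k u)" for u
    proof (cases "u > 0")
      case u: True
      have sp: "s * u * \<pi> (s*u) \<le> M\<^sub>0" using pi_le_M0[OF c M0 bound] s u by simp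
      have "?X u = (\<alpha> powr \<alpha> / Gamma \<alpha>) * (exp (- \<alpha> / u) / u powr (1 + \<alpha>)) * (\<gamma> / R) * (s * u * \<pi> (s * u))"
        by (simp add: field_simps)
      also have "\<dots> \<le> (\<alpha> powr \<alpha> / Gamma \<alpha>) * (exp (- \<alpha> / u) / u powr (1 + \<alpha>)) * (\<gamma> / R) * M\<^sub>0"
        using sp Gp ga R by (intro mult_left_mono) auto
      finally show ?thesis using u by (simp add: ennreal_mult'[symmetric] ennreal_leI mult_ac)
    qed simp
    have "(\<integral>\<^sup>+ u \<in> {0<..}. ennreal (?X u) \<partial>lborel)
        \<le> (\<integral>\<^sup>+u. ennreal (M\<^sub>0 * \<gamma> / R * (\<alpha> powr \<alpha> / Gamma \<alpha>)) * ennreal (?k u) \<partial>lborel)"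
      by (intro nn_integral_mono pt)
    also have "\<dots> = ennreal (M\<^sub>0 * \<gamma> / R * (\<alpha> powr \<alpha> / Gamma \<alpha>)) * (\<integral>\<^sup>+u. ennreal (?k u) \<partial>lborel)"
      by (rule nn_integral_cmult) measurable
    also have "\<dots> = ennreal (M\<^sub>0 * \<gamma> / R * (\<alpha> powr \<alpha> / Gamma \<alpha>)) * ennreal (Gamma \<alpha> / \<alpha> powr \<alpha>)"
      by (simp only: kernel_int[OF al])
    also have "\<dots> = ennreal (M\<^sub>0 * \<gamma> / R)"
    proof -
      have Gn: "Gamma \<alpha> \<noteq> 0" using Gp by simp
      have "M\<^sub>0 * \<gamma> / R * (\<alpha> powr \<alpha> / Gamma \<alpha>) * (Gamma \<alpha> / \<alpha> powr \<alpha>) = M\<^sub>0 * \<gamma> / R"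
        using Gn al by (simp add: field_simps)
      moreover have "M\<^sub>0 * \<gamma> / R * (\<alpha> powr \<alpha> / Gamma \<alpha>) \<ge> 0" using Gp M0 ga R by auto
      ultimately show ?thesis by (simp add: ennreal_mult'[symmetric])
    qed
    also have "\<dots> \<le> ennreal ((exp 1 + M\<^sub>0) * min \<alpha> (sqrt \<alpha>) * \<gamma> / R)"
    proof (intro ennreal_leI)
      have "M\<^sub>0 * \<gamma> \<le> (exp 1 + M\<^sub>0) * sqrt \<alpha> * \<gamma>"
      proof -
        have "M\<^sub>0 \<le> (exp 1 + M\<^sub>0) * 1" by simp
        also have "\<dots> \<le> (exp 1 + M\<^sub>0) * sqrt \<alpha>" using sq M0
          by (intro mult_left_mono) (auto intro: add_nonneg_nonneg)
        finally show ?thesis using ga by (intro mult_right_mono) auto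
      qed
      thus "M\<^sub>0 * \<gamma> / R \<le> (exp 1 + M\<^sub>0) * min \<alpha> (sqrt \<alpha>) * \<gamma> / R"
        unfolding mn using R by (intro divide_right_mono) auto
    qed
    finally show ?thesis .
  qed
qed

lemma ref_pos:
  assumes "C > 0" "t > 0" shows "ref_scale C c t > 0"
proof -
  have l1: "ln (1+t) > 0" using assms by simp
  have l2: "ln (1 + ln (1+t)) > 0" using l1 by simp
  have d1: "1 + ln (1+t) > 0" using l1 by linarith
  have d2: "(1 + ln (1 + ln (1+t))) powr (1+c) > 0" using l2 by simp
  show ?thesis unfolding ref_scale_def by (rule divide_pos_pos[OF assms(1) mult_pos_pos[OF d1 d2]])
qed

lemma invR_L:
  fixes a b c C \<omega> :: real
  assumes C: "C > 0" and c: "c > 0" and b: "b > 0" and w: "\<omega> \<ge> exp 1"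
  shows "1 / ref_scale C c (exp (a + b*\<omega>)) \<le>
     ((2+\<bar>a\<bar>+b) * (2 + ln (2*(2+\<bar>a\<bar>+b))) powr (1+c) / C) * \<omega> * ln \<omega> powr (1+c)"
proof -
  define t where "t = exp (a + b*\<omega>)"
  define P where "P = 2+\<bar>a\<bar>+b"
  have e1: "(1::real) \<le> exp 1" by simp
  have w1: "\<omega> \<ge> 1" using w e1 by linarith
  have "ln (exp 1) \<le> ln \<omega>" using w w1 by (subst ln_le_cancel_iff) auto
  hence lw: "ln \<omega> \<ge> 1" by simp
  have P1: "P \<ge> 1" unfolding P_def using b by simp
  have tp: "t > 0" unfolding t_def by simp
  have l1: "ln (1+t) > 0" using tp by simp
  have l2: "ln (1 + ln (1+t)) > 0" using l1 by simp
  have "1 + t \<le> 2 * exp \<bar>a + b*\<omega>\<bar>"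
  proof -
    have "t \<le> exp \<bar>a + b*\<omega>\<bar>" unfolding t_def by simp
    moreover have "1 \<le> exp \<bar>a + b*\<omega>\<bar>" by simp
    ultimately show ?thesis by linarith
  qed
  hence "ln (1+t) \<le> ln (2 * exp \<bar>a + b*\<omega>\<bar>)" using tp by (intro ln_mono) auto
  also have "\<dots> = ln 2 + \<bar>a + b*\<omega>\<bar>" by (simp add: ln_mult)
  also have "\<dots> \<le> 1 + \<bar>a\<bar> + b*\<omega>" 
  proof -
    have "b*\<omega> \<ge> 0" using b w1 by simp
    thus ?thesis using ln_2_less_1 abs_triangle_ineq[of a "b*\<omega>"] by simp
  qed
  finally have "1 + ln (1+t) \<le> 2 + \<bar>a\<bar> + b*\<omega>" by simp
  also have "\<dots> \<le> P * \<omega>"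
  proof -
    have "2 \<le> 2*\<omega>" "\<bar>a\<bar> \<le> \<bar>a\<bar>*\<omega>" using w1 by (auto intro: mult_left_mono[of 1 \<omega>, simplified])
    thus ?thesis by (simp add: algebra_simps P_def)
  qed
  finally have A: "1 + ln (1+t) \<le> P * \<omega>" .
  have "1 + ln (1 + ln (1+t)) \<le> 1 + ln (2 * (P*\<omega>))"
  proof -
    have "1 + ln (1+t) \<le> 2 * (P*\<omega>)" 
    proof -
      have "0 \<le> P*\<omega>" using P1 w1 by simp
      thus ?thesis using A by linarith
    qed
    hence "ln (1 + ln (1+t)) \<le> ln (2 * (P*\<omega>))" using l1 by (intro ln_mono) auto
    thus ?thesis by simp
  qed
  also have "\<dots> = 1 + ln (2*P) + ln \<omega>" using P1 w1 by (simp add: ln_mult)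
  also have "\<dots> \<le> (2 + ln (2*P)) * ln \<omega>"
  proof -
    have "ln (2*P) \<ge> 0" using P1 by simp
    hence "(1 + ln (2*P)) * 1 \<le> (1 + ln (2*P)) * ln \<omega>" using lw by (intro mult_left_mono) auto
    thus ?thesis by (simp add: algebra_simps)
  qed
  finally have B: "1 + ln (1 + ln (1+t)) \<le> (2 + ln (2*P)) * ln \<omega>" .
  have B': "(1 + ln (1 + ln (1+t))) powr (1+c) \<le> (2 + ln (2*P)) powr (1+c) * ln \<omega> powr (1+c)"
  proof -
    have "(1 + ln (1 + ln (1+t))) powr (1+c) \<le> ((2 + ln (2*P)) * ln \<omega>) powr (1+c)"
      using B l2 c by (intro powr_mono2) auto
    also have "\<dots> = (2 + ln (2*P)) powr (1+c) * ln \<omega> powr (1+c)"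
      using P1 lw by (intro powr_mult)
    finally show ?thesis .
  qed
  have "1 / ref_scale C c t = (1 + ln (1 + t)) * (1 + ln (1 + ln (1 + t))) powr (1 + c) / C"
    unfolding ref_scale_def by simp
  also have "\<dots> \<le> (P * \<omega>) * ((2 + ln (2*P)) powr (1+c) * ln \<omega> powr (1+c)) / C"
    using A B' C l1 by (intro divide_right_mono mult_mono) auto
  also have "\<dots> = (P * (2 + ln (2*P)) powr (1+c) / C) * \<omega> * ln \<omega> powr (1+c)" by simp
  finally show ?thesis unfolding t_def P_def .
qed

lemma f_bnd:
  fixes \<pi> :: "real \<Rightarrow> real" and M\<^sub>0 c C t z \<alpha> \<gamma> :: real
  assumes pm: "\<pi> \<in> borel_measurable lborel"
    and nonneg: "\<forall>t>0. \<pi> t \<ge> 0"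
    and dint: "(\<integral>\<^sup>+ t \<in> {0<..}. ennreal (\<pi> t) \<partial>lborel) = 1"
    and c: "c > 0" and C: "C > 0" and M0: "M\<^sub>0 > 0"
    and bound: "\<forall>t>0. t * \<pi> t \<le> M\<^sub>0
        * (1 / (1 + ln (1 + 1 / t))) * (1 / (1 + ln (1 + t)))
        * (1 / (1 + ln (1 + ln (1 + 1 / t))) powr (1 + c))
        * (1 / (1 + ln (1 + ln (1 + t))) powr (1 + c))"
    and t: "t > 0" and al: "\<alpha> > 0" and ga: "\<gamma> > 0"
  shows "f_fun \<pi> C c \<alpha> z \<gamma> t \<le> ennreal ((exp 1 + M\<^sub>0) * min \<alpha> (sqrt \<alpha>) * \<gamma> * (1 / ref_scale C c t))"
proof -
  have s: "t powr \<gamma> * exp (\<gamma> * z) > 0" using t by simp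
  have R: "ref_scale C c t > 0" using ref_pos[OF C t] .
  show ?thesis unfolding f_fun_def
    using core_bound[OF pm nonneg dint c M0 bound s R al ga] by simp
qed

theorem lemmaS5:
  fixes \<pi> :: "real \<Rightarrow> real" and c C M\<^sub>0 :: real
    and n :: nat and x :: "nat \<Rightarrow> real ^ 'p"
    and K L :: "nat set" and tK a b :: "nat \<Rightarrow> real"
  assumes dens_meas: "\<pi> \<in> borel_measurable lborel"
    and dens_nonneg: "\<forall>t>0. \<pi> t \<ge> 0"
    and dens_int: "(\<integral>\<^sup>+ t \<in> {0<..}. ennreal (\<pi> t) \<partial>lborel) = 1"
    and c_pos: "c > 0" and C_pos: "C > 0" and M0_pos: "M\<^sub>0 > 0"
    and asymp: "(\<lambda>t. t * \<pi> t) \<sim>[at_top] (\<lambda>t. ref_scale C c t)"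
    and bound: "\<forall>t>0. t * \<pi> t \<le> M\<^sub>0
        * (1 / (1 + ln (1 + 1 / t))) * (1 / (1 + ln (1 + t)))
        * (1 / (1 + ln (1 + ln (1 + 1 / t))) powr (1 + c))
        * (1 / (1 + ln (1 + ln (1 + t))) powr (1 + c))"
    and partition: "K \<union> L = {1..n}" "K \<inter> L = {}"
    and tK_pos: "\<forall>i\<in>K. tK i > 0"
    and b_pos: "\<forall>i\<in>L. b i > 0"
  shows "\<exists>M>0. \<exists>\<omega>\<^sub>0>0. \<forall>\<omega>\<ge>\<omega>\<^sub>0. \<forall>i\<in>{1..n}. \<forall>\<alpha>>0. \<forall>\<beta>::real^'p. \<forall>\<gamma>>0.
           (i \<in> K \<longrightarrow> f_fun \<pi> C c \<alpha> (x i \<bullet> \<beta>) \<gamma> (tK i)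
                        \<le> ennreal (M * min \<alpha> (sqrt \<alpha>) * \<gamma>)) \<and>
           (i \<in> L \<longrightarrow> f_fun \<pi> C c \<alpha> (x i \<bullet> \<beta>) \<gamma> (exp (a i + b i * \<omega>))
                        \<le> ennreal (M * \<omega> * (ln \<omega>) powr (1 + c) * min \<alpha> (sqrt \<alpha>) * \<gamma>))"
proof -
  define Q where "Q = (\<lambda>i. (2+\<bar>a i\<bar>+b i) * (2 + ln (2*(2+\<bar>a i\<bar>+b i))) powr (1+c) / C)"
  define S where "S = (\<Sum>i\<in>K. 1 / ref_scale C c (tK i)) + (\<Sum>i\<in>L. Q i) + 1"
  define K0 where "K0 = exp 1 + M\<^sub>0"
  have finK: "finite K" and finL: "finite L" using partition(1)
    by (metis finite_Un finite_atLeastAtMost)+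
  have Kpos: "K0 > 0" unfolding K0_def using M0_pos by (simp add: add_pos_pos)
  have Rpos: "i \<in> K \<Longrightarrow> 1 / ref_scale C c (tK i) > 0" for i
    using ref_pos[OF C_pos] tK_pos by simp
  have Qpos: "i \<in> L \<Longrightarrow> Q i \<ge> 0" for i
    unfolding Q_def using b_pos C_pos by (auto intro!: divide_nonneg_pos mult_nonneg_nonneg)
  have sK: "(\<Sum>i\<in>K. 1 / ref_scale C c (tK i)) \<ge> 0" using Rpos by (intro sum_nonneg) (auto intro: less_imp_le)
  have sL: "(\<Sum>i\<in>L. Q i) \<ge> 0" using Qpos by (intro sum_nonneg) auto
  have Spos: "S > 0" unfolding S_def using sK sL by simp
  have leK: "i \<in> K \<Longrightarrow> 1 / ref_scale C c (tK i) \<le> S" for i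
  proof -
    assume i: "i \<in> K"
    have "1 / ref_scale C c (tK i) \<le> (\<Sum>i\<in>K. 1 / ref_scale C c (tK i))"
      using i finK Rpos by (intro member_le_sum) (auto intro: less_imp_le)
    thus ?thesis unfolding S_def using sL by simp
  qed
  have leL: "i \<in> L \<Longrightarrow> Q i \<le> S" for i
  proof -
    assume i: "i \<in> L"
    have "Q i \<le> (\<Sum>i\<in>L. Q i)" using i finL Qpos by (intro member_le_sum) auto
    thus ?thesis unfolding S_def using sK by simp
  qed
  have KS: "K0 * S > 0" using Kpos Spos by simp
  have main: "(i \<in> K \<longrightarrow> f_fun \<pi> C c \<alpha> (x i \<bullet> \<beta>) \<gamma> (tK i)
                        \<le> ennreal (K0 * S * min \<alpha> (sqrt \<alpha>) * \<gamma>)) \<and>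
           (i \<in> L \<longrightarrow> f_fun \<pi> C c \<alpha> (x i \<bullet> \<beta>) \<gamma> (exp (a i + b i * \<omega>))
                        \<le> ennreal (K0 * S * \<omega> * (ln \<omega>) powr (1 + c) * min \<alpha> (sqrt \<alpha>) * \<gamma>))"
    if w: "\<omega> \<ge> exp 1" and al: "\<alpha> > 0" and ga: "\<gamma> > 0"
    for \<omega> :: real and i :: nat and \<alpha> :: real and \<beta> :: "real^'p" and \<gamma> :: real
  proof (intro conjI impI)
    have m0: "min \<alpha> (sqrt \<alpha>) \<ge> 0" using al by simp
    have base: "K0 * min \<alpha> (sqrt \<alpha>) * \<gamma> \<ge> 0" using Kpos m0 ga by simp
      assume iK: "i \<in> K"
      have "f_fun \<pi> C c \<alpha> (x i \<bullet> \<beta>) \<gamma> (tK i) \<le> ennreal (K0 * min \<alpha> (sqrt \<alpha>) * \<gamma> * (1 / ref_scale C c (tK i)))"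
        unfolding K0_def using iK tK_pos by (intro f_bnd[OF dens_meas dens_nonneg dens_int c_pos C_pos M0_pos bound] al ga) auto
      also have "\<dots> \<le> ennreal (K0 * S * min \<alpha> (sqrt \<alpha>) * \<gamma>)"
      proof (rule ennreal_leI)
        have "K0 * min \<alpha> (sqrt \<alpha>) * \<gamma> * (1 / ref_scale C c (tK i)) \<le> K0 * min \<alpha> (sqrt \<alpha>) * \<gamma> * S"
          using leK[OF iK] base by (intro mult_left_mono) auto
        thus "K0 * min \<alpha> (sqrt \<alpha>) * \<gamma> * (1 / ref_scale C c (tK i)) \<le> K0 * S * min \<alpha> (sqrt \<alpha>) * \<gamma>"
          by (simp add: mult_ac)
      qed
      finally show "f_fun \<pi> C c \<alpha> (x i \<bullet> \<beta>) \<gamma> (tK i) \<le> ennreal (K0 * S * min \<alpha> (sqrt \<alpha>) * \<gamma>)" .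
  next
    have m0: "min \<alpha> (sqrt \<alpha>) \<ge> 0" using al by simp
    have base: "K0 * min \<alpha> (sqrt \<alpha>) * \<gamma> \<ge> 0" using Kpos m0 ga by simp
      assume iL: "i \<in> L"
      have lw: "ln \<omega> powr (1+c) \<ge> 0" by simp
      have w0: "\<omega> \<ge> 0" using w by (meson exp_ge_zero order_trans)
      have "f_fun \<pi> C c \<alpha> (x i \<bullet> \<beta>) \<gamma> (exp (a i + b i * \<omega>)) \<le> ennreal (K0 * min \<alpha> (sqrt \<alpha>) * \<gamma> * (1 / ref_scale C c (exp (a i + b i * \<omega>))))"
        unfolding K0_def by (intro f_bnd[OF dens_meas dens_nonneg dens_int c_pos C_pos M0_pos bound] al ga) auto
      also have "\<dots> \<le> ennreal (K0 * S * \<omega> * (ln \<omega>) powr (1 + c) * min \<alpha> (sqrt \<alpha>) * \<gamma>)"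
      proof (rule ennreal_leI)
        have "1 / ref_scale C c (exp (a i + b i * \<omega>)) \<le> Q i * \<omega> * ln \<omega> powr (1+c)"
          unfolding Q_def using invR_L[OF C_pos c_pos _ w, of "b i" "a i"] b_pos iL by auto
        also have "\<dots> \<le> S * \<omega> * ln \<omega> powr (1+c)"
          using leL[OF iL] w0 lw by (intro mult_right_mono) auto
        finally have "K0 * min \<alpha> (sqrt \<alpha>) * \<gamma> * (1 / ref_scale C c (exp (a i + b i * \<omega>))) \<le> K0 * min \<alpha> (sqrt \<alpha>) * \<gamma> * (S * \<omega> * ln \<omega> powr (1+c))"
          using base by (intro mult_left_mono) auto
        thus "K0 * min \<alpha> (sqrt \<alpha>) * \<gamma> * (1 / ref_scale C c (exp (a i + b i * \<omega>))) \<le> K0 * S * \<omega> * (ln \<omega>) powr (1 + c) * min \<alpha> (sqrt \<alpha>) * \<gamma>"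
          by (simp add: mult_ac)
      qed
      finally show "f_fun \<pi> C c \<alpha> (x i \<bullet> \<beta>) \<gamma> (exp (a i + b i * \<omega>)) \<le> ennreal (K0 * S * \<omega> * (ln \<omega>) powr (1 + c) * min \<alpha> (sqrt \<alpha>) * \<gamma>)" .
  qed
  show ?thesis
    apply (rule exI[of _ "K0 * S"], rule conjI, rule KS)
    apply (rule exI[of _ "exp 1"], rule conjI, simp)
    using main by blast
qed

end
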